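(* Let $N\ge 3$ and let $m:\mathbb R^{2N}\to\mathbb R$ be measurable and satisfy $$m(X-tV,V)=m(X,V)\quad\text{for all }X\in\mathcal Q^\circ,\ V\in F_X,\ t\in\mathbb R.$$ Then there is a measurable $m_0:\mathbb R\times\mathbb R^N\to\mathbb R$ such that $$m(X,V)=m_0\big(X\cdot(\mathsf E(V)\mathbf 1-\mathsf P(V)V),\,V\big)\quad\text{for all }X\in\mathcal Q^\circ,\ V\in F_X.$$
   Context: Fix an integer $N\ge 3$ and write $\mathbf 1=(1,\dots,1)\in\mathbb R^N$. Let $\mathcal Q^\circ=\{X=(x_1,\dots,x_N)\in\mathbb R^N: x_1<x_2<\dots<x_N\}$ and $\Delta=\{(u_1,u_2)\in\mathbb R^2:u_1=u_2\}$. For $X\in\mathcal Q^\circ$ and $U=(u_1,u_2)\in\mathbb R^2$ define $\psi(X,U)\in\mathbb R^N$ by $\psi_1=u_1$, $\psi_2=u_2$ and $\psi_i=\frac{(x_i-x_2)u_1-(x_i-x_1)u_2}{x_1-x_2}$ for $3\le i\le N$, and let $F_X=\{\psi(X,U):U\in\mathbb R^2\setminus\Delta\}$ (equivalently, the set of $V\in\mathbb R^N\setminus\mathbb R\mathbf 1$ such that $X+sV\in\mathbb R\mathbf 1$ for some $s\in\mathbb R$). Momentum and energy maps: $\mathsf P(V)=\sum_{i=1}^N v_i$, $\mathsf E(V)=|V|^2$. *)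

theory Defs
  imports "HOL-Analysis.Analysis"
begin

text \<open>Coordinates of R^N are indexed by a finite, well-ordered type 'n with CARD('n) = N;
  the order on 'n plays the role of the order 1 < 2 < ... < N of indices.\<close>

definition idx1 :: "'n::{finite,wellorder}" where
  "idx1 = (LEAST i. True)"

definition idx2 :: "'n::{finite,wellorder}" where
  "idx2 = (LEAST i. i \<noteq> idx1)"

definition Qcirc :: "(real^'n::{finite,wellorder}) set" where
  "Qcirc = {X. \<forall>i j. i < j \<longrightarrow> X$i < X$j}"

definition psi :: "real^('n::{finite,wellorder}) \<Rightarrow> real \<times> real \<Rightarrow> real^('n::{finite,wellorder})" where
  "psi X U = (\<chi> i. if i = idx1 then fst U else if i = idx2 then snd U
     else ((X$i - X$idx2) * fst U - (X$i - X$idx1) * snd U) / (X$idx1 - X$idx2))"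

definition FX :: "real^('n::{finite,wellorder}) \<Rightarrow> (real^('n::{finite,wellorder})) set" where
  "FX X = {psi X U | U. fst U \<noteq> snd U}"

definition momentum :: "real^'n::finite \<Rightarrow> real" where
  "momentum V = (\<Sum>i\<in>UNIV. V$i)"

definition energy :: "real^'n::finite \<Rightarrow> real" where
  "energy V = (norm V)^2"

definition one_vec :: "real^'n::finite" where
  "one_vec = (\<chi> i. 1)"

end

theory Submission imports Defs begin
lemma meas_aux:
  fixes m :: "(real^('n::{finite,wellorder})) \<times> (real^('n::{finite,wellorder})) \<Rightarrow> real"
  assumes "m \<in> borel_measurable borel"
  shows "(\<lambda>p::real \<times> (real^('n::{finite,wellorder})). m ((1 / (snd p $ idx2 - snd p $ idx1)) *\<^sub>R snd p
      + (fst p / (real CARD('n) * energy (snd p) - (momentum (snd p))^2)) *\<^sub>R one_vec, snd p)) \<in> borel_measurable borel"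
proof -
  have c1: "continuous_on UNIV (\<lambda>V::real^('n::{finite,wellorder}). energy V)" unfolding energy_def by (intro continuous_intros)
  have c2: "continuous_on UNIV (\<lambda>V::real^('n::{finite,wellorder}). momentum V)" unfolding momentum_def by (intro continuous_intros)
  have e[measurable]: "(\<lambda>V::real^('n::{finite,wellorder}). energy V) \<in> borel_measurable borel" using c1 borel_measurable_continuous_onI by blast
  have mo[measurable]: "(\<lambda>V::real^('n::{finite,wellorder}). momentum V) \<in> borel_measurable borel" using c2 borel_measurable_continuous_onI by blast
  have cc[measurable]: "\<And>i. (\<lambda>V::real^('n::{finite,wellorder}). V $ i) \<in> borel_measurable borel"
    by (intro borel_measurable_continuous_onI continuous_intros)
  have "(\<lambda>p::real \<times> (real^('n::{finite,wellorder})). ((1 / (snd p $ idx2 - snd p $ idx1)) *\<^sub>R snd p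
      + (fst p / (real CARD('n) * energy (snd p) - (momentum (snd p))^2)) *\<^sub>R one_vec, snd p)) \<in> borel \<Otimes>\<^sub>M borel \<rightarrow>\<^sub>M borel \<Otimes>\<^sub>M borel"
    by measurable
  then have "(\<lambda>p::real \<times> (real^('n::{finite,wellorder})). ((1 / (snd p $ idx2 - snd p $ idx1)) *\<^sub>R snd p
      + (fst p / (real CARD('n) * energy (snd p) - (momentum (snd p))^2)) *\<^sub>R one_vec, snd p)) \<in> borel \<rightarrow>\<^sub>M borel"
    by (simp add: borel_prod)
  from measurable_compose[OF this assms] show ?thesis by (simp add: o_def)
qed

lemma idx_less:
  assumes "CARD('n::{finite,wellorder}) \<ge> 2"
  shows "(idx1::'n) < idx2"
proof -
  have "\<exists>i::'n. i \<noteq> idx1"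
  proof (rule ccontr)
    assume "\<not> ?thesis"
    then have "(UNIV::'n set) = {idx1}" by auto
    then have "card (UNIV::'n set) = card {idx1::'n}" by (simp only:)
    then have "CARD('n) = 1" by simp
    then show False using assms by simp
  qed
  then have "idx2 \<noteq> (idx1::'n)" unfolding idx2_def by (rule LeastI_ex)
  moreover have "(idx1::'n) \<le> idx2" unfolding idx1_def by (simp add: Least_le)
  ultimately show ?thesis by simp
qed

lemma psi_affine:
  fixes X :: "real^('n::{finite,wellorder})"
  assumes "X $ idx1 \<noteq> X $ idx2"
  shows "psi X U = ((fst U - snd U) / (X$idx1 - X$idx2)) *\<^sub>R X
     + ((X$idx1 * snd U - X$idx2 * fst U) / (X$idx1 - X$idx2)) *\<^sub>R one_vec"
proof -
  have d: "X$idx1 - X$idx2 \<noteq> 0" using assms by simp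
  show ?thesis
    unfolding vec_eq_iff
  proof
    fix i
    let ?f = "fst U" and ?s = "snd U" and ?x1 = "X$idx1" and ?x2 = "X$idx2"
    have rhs: "(((?f - ?s) / (?x1 - ?x2)) *\<^sub>R X + ((?x1 * ?s - ?x2 * ?f) / (?x1 - ?x2)) *\<^sub>R one_vec) $ i
      = ((?f - ?s) * X$i + (?x1 * ?s - ?x2 * ?f)) / (?x1 - ?x2)"
      by (simp add: one_vec_def add_divide_distrib)
    have "psi X U $ i = ((?f - ?s) * X$i + (?x1 * ?s - ?x2 * ?f)) / (?x1 - ?x2)"
    proof (cases "i = idx1")
      case True
      have "(?f - ?s) * X$i + (?x1 * ?s - ?x2 * ?f) = ?f * (?x1 - ?x2)"
        using True by (simp add: algebra_simps)
      then show ?thesis using True d by (simp add: psi_def)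
    next
      case F1: False
      show ?thesis
      proof (cases "i = idx2")
        case True
        have "(?f - ?s) * X$i + (?x1 * ?s - ?x2 * ?f) = ?s * (?x1 - ?x2)"
          using True by (simp add: algebra_simps)
        then show ?thesis using True F1 d by (simp add: psi_def)
      next
        case False
        have "(?f - ?s) * X$i + (?x1 * ?s - ?x2 * ?f) = (X$i - ?x2) * ?f - (X$i - ?x1) * ?s"
          by (simp add: algebra_simps)
        then show ?thesis using False F1 by (simp add: psi_def)
      qed
    qed
    then show "psi X U $ i = (((fst U - snd U) / (X$idx1 - X$idx2)) *\<^sub>R X
     + ((X$idx1 * snd U - X$idx2 * fst U) / (X$idx1 - X$idx2)) *\<^sub>R one_vec) $ i"
      using rhs by simp
  qed
qed

lemma D_pos:
  fixes V :: "real^'n::finite"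
  assumes "V $ i \<noteq> V $ j"
  shows "real CARD('n) * energy V - (momentum V)^2 > 0"
proof -
  define E where "E = (\<Sum>k\<in>UNIV. (V$k)^2)"
  define P where "P = (\<Sum>k\<in>UNIV. V$k)"
  have E: "energy V = E"
    unfolding E_def energy_def power2_norm_eq_inner inner_vec_def by (simp add: power2_eq_square)
  have inner: "\<And>k. (\<Sum>l\<in>UNIV. (V$k - V$l)^2) = real CARD('n) * (V$k)^2 + E - 2 * V$k * P"
  proof -
    fix k
    have "(\<Sum>l\<in>UNIV. (V$k - V$l)^2) = (\<Sum>l\<in>UNIV. (V$k)^2 + (V$l)^2 - 2 * V$k * V$l)"
      by (simp add: power2_diff algebra_simps)
    also have "\<dots> = (\<Sum>l::'n\<in>UNIV. (V$k)^2) + (\<Sum>l\<in>UNIV. (V$l)^2) - (\<Sum>l\<in>UNIV. 2 * V$k * V$l)"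
      by (simp add: sum.distrib sum_subtractf)
    also have "\<dots> = real CARD('n) * (V$k)^2 + E - 2 * V$k * P"
      by (simp add: E_def P_def sum_distrib_left)
    finally show "(\<Sum>l\<in>UNIV. (V$k - V$l)^2) = real CARD('n) * (V$k)^2 + E - 2 * V$k * P" .
  qed
  have "(\<Sum>k\<in>UNIV. \<Sum>l\<in>UNIV. (V$k - V$l)^2) = (\<Sum>k\<in>UNIV. real CARD('n) * (V$k)^2 + E - 2 * V$k * P)"
    by (simp add: inner)
  also have "\<dots> = (\<Sum>k\<in>UNIV. real CARD('n) * (V$k)^2) + (\<Sum>k::'n\<in>UNIV. E) - (\<Sum>k\<in>UNIV. 2 * P * V$k)"
    by (simp add: sum.distrib sum_subtractf algebra_simps)
  also have "\<dots> = 2 * (real CARD('n) * E - P^2)"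
  proof -
    have a: "(\<Sum>k\<in>UNIV. real CARD('n) * (V$k)^2) = real CARD('n) * E"
      by (simp add: E_def sum_distrib_left)
    have b: "(\<Sum>k::'n\<in>UNIV. E) = real CARD('n) * E" by simp
    have c: "(\<Sum>k\<in>UNIV. 2 * P * V$k) = 2 * P * P"
      by (simp add: P_def sum_distrib_left)
    show ?thesis unfolding a b c by (simp add: power2_eq_square)
  qed
  finally have eq: "(\<Sum>k\<in>UNIV. \<Sum>l\<in>UNIV. (V$k - V$l)^2) = 2 * (real CARD('n) * energy V - (momentum V)^2)"
    by (simp add: E P_def momentum_def)
  have "(V$i - V$j)^2 \<le> (\<Sum>l\<in>UNIV. (V$i - V$l)^2)"
    by (rule member_le_sum) auto
  also have "\<dots> \<le> (\<Sum>k\<in>UNIV. \<Sum>l\<in>UNIV. (V$k - V$l)^2)"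
    by (rule member_le_sum[where f="\<lambda>k. \<Sum>l\<in>UNIV. (V$k - V$l)^2"]) (auto intro: sum_nonneg)
  finally have le: "(V$i - V$j)^2 \<le> 2 * (real CARD('n) * energy V - (momentum V)^2)" using eq by simp
  have pos: "0 < (V$i - V$j)^2" using assms by simp
  have "0 < 2 * (real CARD('n) * energy V - (momentum V)^2)" using pos le by (rule less_le_trans)
  then show ?thesis by simp
qed
lemma phi_eq:
  fixes V :: "real^'n::finite"
  shows "(\<alpha> *\<^sub>R V + \<beta> *\<^sub>R one_vec) \<bullet> (energy V *\<^sub>R one_vec - momentum V *\<^sub>R V)
    = \<beta> * (real CARD('n) * energy V - (momentum V)^2)"
proof -
  have vv: "V \<bullet> V = energy V" by (simp add: energy_def power2_norm_eq_inner)
  have v1: "V \<bullet> one_vec = momentum V" by (simp add: inner_vec_def one_vec_def momentum_def)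
  have o1: "one_vec \<bullet> V = momentum V" using v1 by (simp add: inner_commute)
  have oo: "one_vec \<bullet> (one_vec::real^'n) = real CARD('n)" by (simp add: inner_vec_def one_vec_def)
  have "(\<alpha> *\<^sub>R V + \<beta> *\<^sub>R one_vec) \<bullet> (energy V *\<^sub>R one_vec - momentum V *\<^sub>R V)
     = \<alpha> * energy V * (V \<bullet> one_vec) - \<alpha> * momentum V * (V \<bullet> V) + \<beta> * energy V * ((one_vec::real^'n) \<bullet> one_vec) - \<beta> * momentum V * (one_vec \<bullet> V)"
    by (simp add: inner_add_left inner_diff_right algebra_simps)
  also have "\<dots> = \<beta> * (real CARD('n) * energy V - (momentum V)^2)"
    unfolding vv v1 o1 oo by (simp add: algebra_simps power2_eq_square)
  finally show ?thesis .
qed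

theorem proposition3p6:
  fixes m :: "(real^('n::{finite,wellorder})) \<times> (real^('n::{finite,wellorder})) \<Rightarrow> real"
  assumes "CARD('n) \<ge> 3"
    and "m \<in> borel_measurable borel"
    and "\<forall>X\<in>Qcirc. \<forall>V\<in>FX X. \<forall>t::real. m (X - t *\<^sub>R V, V) = m (X, V)"
  shows "\<exists>m0 :: real \<times> (real^('n::{finite,wellorder})) \<Rightarrow> real. m0 \<in> borel_measurable borel \<and>
           (\<forall>X\<in>Qcirc. \<forall>V\<in>FX X.
              m (X, V) = m0 (X \<bullet> (energy V *\<^sub>R one_vec - momentum V *\<^sub>R V), V))"
proof (intro exI conjI ballI)
  let ?m0 = "\<lambda>p::real \<times> (real^('n::{finite,wellorder})). m ((1 / (snd p $ idx2 - snd p $ idx1)) *\<^sub>R snd p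
      + (fst p / (real CARD('n) * energy (snd p) - (momentum (snd p))^2)) *\<^sub>R one_vec, snd p)"
  show "?m0 \<in> borel_measurable borel" using meas_aux[OF assms(2)] .
  fix X V :: "real^('n::{finite,wellorder})"
  assume XQ: "X \<in> Qcirc" and VF: "V \<in> FX X"
  obtain U where U: "fst U \<noteq> snd U" "V = psi X U" using VF unfolding FX_def by blast
  have lt: "(idx1::'n) < idx2" by (rule idx_less) (use assms(1) in simp)
  have x12: "X$idx1 < X$idx2" using XQ lt unfolding Qcirc_def by simp
  define a where "a = (fst U - snd U) / (X$idx1 - X$idx2)"
  define b where "b = (X$idx1 * snd U - X$idx2 * fst U) / (X$idx1 - X$idx2)"
  have a0: "a \<noteq> 0" using U(1) x12 by (simp add: a_def)
  have Vab: "V = a *\<^sub>R X + b *\<^sub>R one_vec"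
    using U(2) psi_affine[of X U] x12 by (simp add: a_def b_def)
  define \<alpha> where "\<alpha> = 1 / a"
  define \<beta> where "\<beta> = - b / a"
  have Xab: "X = \<alpha> *\<^sub>R V + \<beta> *\<^sub>R one_vec"
    unfolding Vab \<alpha>_def \<beta>_def using a0
    by (simp add: scaleR_add_right algebra_simps divide_inverse)
  have v21: "V$idx2 - V$idx1 = a * (X$idx2 - X$idx1)"
    using Vab by (simp add: one_vec_def algebra_simps)
  have vne: "V$idx1 \<noteq> V$idx2" using v21 a0 x12 by auto
  have Dpos: "real CARD('n) * energy V - (momentum V)^2 > 0" using D_pos[OF vne] .
  have phi: "X \<bullet> (energy V *\<^sub>R one_vec - momentum V *\<^sub>R V)
     = \<beta> * (real CARD('n) * energy V - (momentum V)^2)"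
    by (subst Xab) (rule phi_eq)
  define t where "t = \<alpha> - 1 / (V $ idx2 - V $ idx1)"
  have arg: "(1 / (V $ idx2 - V $ idx1)) *\<^sub>R V
      + (X \<bullet> (energy V *\<^sub>R one_vec - momentum V *\<^sub>R V) / (real CARD('n) * energy V - (momentum V)^2)) *\<^sub>R one_vec
      = X - t *\<^sub>R V"
  proof -
    have "X \<bullet> (energy V *\<^sub>R one_vec - momentum V *\<^sub>R V) / (real CARD('n) * energy V - (momentum V)^2) = \<beta>"
      using phi Dpos by simp
    then have l: "(1 / (V $ idx2 - V $ idx1)) *\<^sub>R V
      + (X \<bullet> (energy V *\<^sub>R one_vec - momentum V *\<^sub>R V) / (real CARD('n) * energy V - (momentum V)^2)) *\<^sub>R one_vec
      = (1 / (V $ idx2 - V $ idx1)) *\<^sub>R V + \<beta> *\<^sub>R one_vec" by simp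
    have r1: "X - t *\<^sub>R V = (\<alpha> *\<^sub>R V + \<beta> *\<^sub>R one_vec) - t *\<^sub>R V"
      using Xab by simp
    have r2: "(\<alpha> *\<^sub>R V + \<beta> *\<^sub>R one_vec) - t *\<^sub>R V = (1 / (V $ idx2 - V $ idx1)) *\<^sub>R V + \<beta> *\<^sub>R one_vec"
      by (simp add: t_def algebra_simps)
    show ?thesis using l r1 r2 by simp
  qed
  have "m (X - t *\<^sub>R V, V) = m (X, V)" using assms(3) XQ VF by blast
  then show "m (X, V) = ?m0 (X \<bullet> (energy V *\<^sub>R one_vec - momentum V *\<^sub>R V), V)"
    using arg by simp
qed

end
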